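(* Let $R$ be a ring. Then $R$ is a GSWNC ring if and only if for every non-invertible $a \in R$, at least one of $a - a^2$ and $a + a^2$ is nilpotent.
   Context: All rings are associative with identity. An element $a$ of a ring is strongly weakly nil-clean if there exist an idempotent $e$ and a nilpotent $q$ with $eq = qe$ such that $a = q + e$ or $a = q - e$. A ring is GSWNC if every non-invertible element is strongly weakly nil-clean. *)

theory Defs
  imports Main
begin

text \<open>Rings: associative with identity, not necessarily commutative; the zero ring
is allowed (class ring + monoid_mult, no 0 \<noteq> 1 requirement).\<close>

definition invertible :: "'a::{ring, monoid_mult} \<Rightarrow> bool" where
  "invertible a \<longleftrightarrow> (\<exists>b. a * b = 1 \<and> b * a = 1)"

definition nilpotent :: "'a::{ring, monoid_mult} \<Rightarrow> bool" where
  "nilpotent q \<longleftrightarrow> (\<exists>n::nat. q ^ n = 0)"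

definition idempotent :: "'a::{ring, monoid_mult} \<Rightarrow> bool" where
  "idempotent e \<longleftrightarrow> e * e = e"

definition strongly_weakly_nil_clean :: "'a::{ring, monoid_mult} \<Rightarrow> bool" where
  "strongly_weakly_nil_clean a \<longleftrightarrow>
     (\<exists>e q. idempotent e \<and> nilpotent q \<and> e * q = q * e \<and> (a = q + e \<or> a = q - e))"

definition GSWNC :: "'a::{ring, monoid_mult} itself \<Rightarrow> bool" where
  "GSWNC (_ :: 'a itself) \<longleftrightarrow>
     (\<forall>a::'a. \<not> invertible a \<longrightarrow> strongly_weakly_nil_clean a)"

end

theory Submission
  imports Defs
begin

lemma comm_pow_mult:
  fixes x y :: "'a::{ring,monoid_mult}"
  assumes "x * y = y * x"
  shows "(x * y) ^ n = x ^ n * y ^ n"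
proof (induct n)
  case 0 then show ?case by simp
next
  case (Suc n)
  have c: "y * x ^ n = x ^ n * y" using power_commuting_commutes[OF assms] by simp
  have "(x*y)^Suc n = x * y * (x ^ n * y ^ n)" using Suc by simp
  also have "\<dots> = x * (y * x ^ n) * y ^ n" by (simp add: mult.assoc)
  also have "\<dots> = x ^ Suc n * y ^ Suc n" by (simp add: c mult.assoc)
  finally show ?case .
qed

lemma nil_mult:
  fixes x y :: "'a::{ring,monoid_mult}"
  assumes "x * y = y * x" "nilpotent x"
  shows "nilpotent (x * y)"
proof -
  obtain n where "x ^ n = 0" using assms(2) unfolding nilpotent_def by blast
  then have "(x*y)^n = 0" using comm_pow_mult[OF assms(1)] by simp
  then show ?thesis unfolding nilpotent_def by blast
qed

lemma nil_neg:
  fixes x :: "'a::{ring,monoid_mult}"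
  assumes "nilpotent x" shows "nilpotent (- x)"
proof -
  have "x * (- 1) = (- 1) * x" by simp
  from nil_mult[OF this assms] show ?thesis by simp
qed

definition CC :: "'a::{ring,monoid_mult} \<Rightarrow> 'a set" where
  "CC a = {x. \<forall>y. y * a = a * y \<longrightarrow> x * y = y * x}"

lemma CC_a: "a \<in> CC a" unfolding CC_def by auto
lemma CC_1: "1 \<in> CC a" unfolding CC_def by auto
lemma CC_add: "x \<in> CC a \<Longrightarrow> y \<in> CC a \<Longrightarrow> x + y \<in> CC a"
  unfolding CC_def by (auto simp: algebra_simps)
lemma CC_diff: "x \<in> CC a \<Longrightarrow> y \<in> CC a \<Longrightarrow> x - y \<in> CC a"
  unfolding CC_def by (auto simp: algebra_simps)
lemma CC_uminus: "x \<in> CC a \<Longrightarrow> - x \<in> CC a"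
  unfolding CC_def by (auto simp: algebra_simps)
lemma CC_mult: "x \<in> CC a \<Longrightarrow> y \<in> CC a \<Longrightarrow> x * y \<in> CC a"
proof -
  assume x: "x \<in> CC a" and y: "y \<in> CC a"
  show ?thesis unfolding CC_def
  proof (intro CollectI allI impI)
    fix z assume z: "z * a = a * z"
    have "x * z = z * x" "y * z = z * y" using x y z unfolding CC_def by auto
    then have "x * y * z = z * (x * y)"
      by (metis mult.assoc)
    then show "x * y * z = z * (x * y)" .
  qed
qed
lemma CC_pow: "x \<in> CC a \<Longrightarrow> x ^ n \<in> CC a"
  by (induct n) (auto intro: CC_1 CC_mult)
lemma CC_comm: "x \<in> CC a \<Longrightarrow> y \<in> CC a \<Longrightarrow> x * y = y * x"
proof -
  assume x: "x \<in> CC a" and y: "y \<in> CC a"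
  have "y * a = a * y" using y unfolding CC_def by auto
  then show ?thesis using x unfolding CC_def by auto
qed

definition stp :: "'a::{ring,monoid_mult} \<Rightarrow> 'a" where
 "stp x = x*x + x*x + x*x - x*x*x - x*x*x"

lemma id1: fixes x :: "'a::{ring,monoid_mult}"
 shows "stp x - stp x * stp x = (x - x*x)*(x-x*x)*(1+1+1 + (x-x*x) + (x-x*x)+ (x-x*x)+ (x-x*x))"
  unfolding stp_def by (simp add: algebra_simps)
lemma id2: fixes x :: "'a::{ring,monoid_mult}"
 shows "stp x - x = - ((x - x*x)*(1 - x - x))"
  unfolding stp_def by (simp add: algebra_simps)

lemma CC_stp: "x \<in> CC a \<Longrightarrow> stp x \<in> CC a"
  unfolding stp_def by (intro CC_diff CC_add CC_mult) auto

primrec it :: "'a::{ring,monoid_mult} \<Rightarrow> nat \<Rightarrow> 'a" where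
  "it a 0 = a"
| "it a (Suc k) = stp (it a k)"

lemma it_CC: "it a k \<in> CC a"
  by (induct k) (auto intro: CC_a CC_stp)

lemma it_main:
  fixes a :: "'a::{ring,monoid_mult}"
  defines "t \<equiv> a - a * a"
  shows "(\<exists>c\<in>CC a. it a k - it a k * it a k = t ^ (2 ^ k) * c) \<and> (\<exists>c\<in>CC a. it a k - a = t * c)"
proof (induct k)
  case 0
  have "0 \<in> CC a" unfolding CC_def by simp
  then show ?case using CC_1[of a] by (simp add: t_def) (metis mult_1_right mult_zero_right diff_self)
next
  case (Suc k)
  let ?x = "it a k"
  let ?m = "2 ^ k :: nat"
  have tC: "t \<in> CC a" unfolding t_def by (intro CC_diff CC_mult CC_a)
  have xC: "?x \<in> CC a" by (rule it_CC)
  obtain c where cC: "c \<in> CC a" and c: "?x - ?x * ?x = t ^ ?m * c" using Suc by blast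
  obtain d where dC: "d \<in> CC a" and d: "?x - a = t * d" using Suc by blast
  define s where "s = (1+1+1 + (?x-?x*?x) + (?x-?x*?x)+ (?x-?x*?x)+ (?x-?x*?x))"
  have sC: "s \<in> CC a" unfolding s_def using xC by (intro CC_add CC_1 CC_diff CC_mult) auto
  have tmC: "t ^ ?m \<in> CC a" using tC by (rule CC_pow)
  have "it a (Suc k) - it a (Suc k) * it a (Suc k) = (t ^ ?m * c) * (t ^ ?m * c) * s"
    using id1[of ?x] c s_def by simp
  also have "\<dots> = t ^ ?m * (c * t ^ ?m) * c * s" by (simp add: mult.assoc)
  also have "\<dots> = t ^ ?m * (t ^ ?m * c) * c * s" using CC_comm[OF cC tmC] by simp
  also have "\<dots> = t ^ (2 ^ Suc k) * (c * c * s)"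
    by (simp add: mult.assoc power_add mult_2)
  finally have A: "\<exists>c\<in>CC a. it a (Suc k) - it a (Suc k) * it a (Suc k) = t ^ (2 ^ Suc k) * c"
    using cC sC by (blast intro: CC_mult)
  have m: "t ^ ?m = t * t ^ (?m - 1)"
  proof -
    have "?m = Suc (?m - 1)" by simp
    then show ?thesis by (metis power_Suc)
  qed
  have "it a (Suc k) - a = (stp ?x - ?x) + (?x - a)" by simp
  also have "\<dots> = - (t ^ ?m * c * (1 - ?x - ?x)) + t * d" using id2[of ?x] c d by simp
  also have "\<dots> = t * (- (t ^ (?m - 1) * c * (1 - ?x - ?x)) + d)"
    by (simp add: m mult.assoc algebra_simps)
  finally have B: "\<exists>c\<in>CC a. it a (Suc k) - a = t * c"
    using tC cC dC xC by (blast intro: CC_mult CC_add CC_uminus CC_pow CC_diff CC_1)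
  show ?case using A B by blast
qed

lemma lift:
  fixes a :: "'a::{ring,monoid_mult}"
  assumes "nilpotent (a - a ^ 2)"
  shows "strongly_weakly_nil_clean a"
proof -
  define t where "t = a - a * a"
  obtain n where n: "t ^ n = 0" using assms unfolding nilpotent_def t_def power2_eq_square by blast
  have "n < 2 ^ n" by (rule less_exp)
  then have "t ^ (2 ^ n) = 0" using n by (metis le_add_diff_inverse less_imp_le power_add mult_zero_left)
  obtain c where "c \<in> CC a" "it a n - it a n * it a n = t ^ (2 ^ n) * c"
    using it_main[of a n] unfolding t_def by blast
  then have ide: "idempotent (it a n)" unfolding idempotent_def using \<open>t ^ (2 ^ n) = 0\<close> by simp
  obtain d where dC: "d \<in> CC a" and d: "it a n - a = t * d"
    using it_main[of a n] unfolding t_def by blast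
  have tC: "t \<in> CC a" unfolding t_def by (intro CC_diff CC_mult CC_a)
  have "nilpotent t" using n unfolding nilpotent_def by blast
  then have "nilpotent (t * d)" using nil_mult CC_comm[OF tC dC] by blast
  then have "nilpotent (- (t * d))" by (rule nil_neg)
  moreover have q: "a - it a n = - (t * d)" using d by (metis minus_diff_eq)
  moreover have "it a n * (a - it a n) = (a - it a n) * it a n"
    using CC_comm[OF it_CC CC_diff[OF CC_a it_CC]] by blast
  ultimately show ?thesis unfolding strongly_weakly_nil_clean_def
    using ide by (metis diff_add_cancel)
qed

theorem proposition2p11:
  shows "GSWNC TYPE('a::{ring, monoid_mult}) \<longleftrightarrow>
    (\<forall>a::'a. \<not> invertible a \<longrightarrow> nilpotent (a - a ^ 2) \<or> nilpotent (a + a ^ 2))"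
proof
  assume G: "GSWNC TYPE('a)"
  show "\<forall>a::'a. \<not> invertible a \<longrightarrow> nilpotent (a - a ^ 2) \<or> nilpotent (a + a ^ 2)"
  proof (intro allI impI)
    fix a :: 'a assume "\<not> invertible a"
    then obtain e q where e: "e * e = e" and q: "nilpotent q" and eq: "e * q = q * e"
      and a: "a = q + e \<or> a = q - e"
      using G unfolding GSWNC_def strongly_weakly_nil_clean_def idempotent_def by blast
    from a show "nilpotent (a - a ^ 2) \<or> nilpotent (a + a ^ 2)"
    proof
      assume a: "a = q + e"
      have "a - a ^ 2 = q * (1 - q - e - e)"
        unfolding a power2_eq_square using e eq by (simp add: algebra_simps)
      moreover have "q * (1 - q - e - e) = (1 - q - e - e) * q"
        using eq by (simp add: algebra_simps)
      ultimately show ?thesis using nil_mult q by metis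
    next
      assume a: "a = q - e"
      have "a + a ^ 2 = q * (1 + q - e - e)"
        unfolding a power2_eq_square using e eq by (simp add: algebra_simps)
      moreover have "q * (1 + q - e - e) = (1 + q - e - e) * q"
        using eq by (simp add: algebra_simps)
      ultimately show ?thesis using nil_mult q by metis
    qed
  qed
next
  assume H: "\<forall>a::'a. \<not> invertible a \<longrightarrow> nilpotent (a - a ^ 2) \<or> nilpotent (a + a ^ 2)"
  show "GSWNC TYPE('a)" unfolding GSWNC_def
  proof (intro allI impI)
    fix a :: 'a assume "\<not> invertible a"
    then have "nilpotent (a - a ^ 2) \<or> nilpotent (a + a ^ 2)" using H by blast
    then show "strongly_weakly_nil_clean a"
    proof
      assume "nilpotent (a - a ^ 2)" then show ?thesis by (rule lift)
    next
      assume "nilpotent (a + a ^ 2)"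
      then have "nilpotent (- (a + a ^ 2))" by (rule nil_neg)
      moreover have "- (a + a ^ 2) = (-a) - (-a) ^ 2" by (simp add: power2_eq_square)
      ultimately have "nilpotent ((-a) - (-a) ^ 2)" by simp
      then have "strongly_weakly_nil_clean (-a)" by (rule lift)
      then obtain e q where "idempotent e" "nilpotent q" "e * q = q * e" "-a = q + e \<or> -a = q - e"
        unfolding strongly_weakly_nil_clean_def by blast
      moreover have "nilpotent (-q)" using \<open>nilpotent q\<close> by (rule nil_neg)
      moreover have "e * (-q) = (-q) * e" using \<open>e * q = q * e\<close> by simp
      moreover have "-a = q + e \<Longrightarrow> a = -q - e" by (metis minus_diff_eq minus_minus diff_minus_eq_add add.commute)
      moreover have "-a = q - e \<Longrightarrow> a = -q + e" by (metis minus_diff_eq minus_minus add.commute diff_minus_eq_add)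
      ultimately show ?thesis unfolding strongly_weakly_nil_clean_def by blast
    qed
  qed
qed

end
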